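(* Let $M$ be a monoid and let $\chi,\chi'$ be elliptic $M$-trees. Then $D_\chi=D_{\chi'}$ if and only if $\chi\cong\chi'$.
   Context: Rooted trees $(r_0,T)$, depth (distance from $r_0$), rays (geodesics from a vertex down to $r_0$, or infinite paths $(\dots,\alpha_1,\alpha_0=r_0)$ with $\mathrm{dep}(\alpha_i)=i$), maximal rays, uniform rooted trees (all maximal rays of equal length), $\alpha\wedge\beta$ = longest common initial segment of rays, $|\cdot|$ = length of a ray. An elliptic contraction is a depth-preserving distance-non-increasing map of vertex sets. An elliptic $M$-tree is $\chi=(r_0,T,\alpha,\theta)$ with $(r_0,T)$ uniform, $\alpha$ a maximal ray, and $\theta:M\to\mathrm{Ell}(r_0,T)$ a monoid homomorphism (action $v\mapsto vm$, extended componentwise to rays) with $\mathrm{Vert}(T)=\bigcup_i\alpha_iM$. $D_\chi(m,m')=|\alpha m\wedge\alpha m'|\in\mathbb N\cup\{\omega\}$. An isomorphism $\chi=(r_0,T,\alpha)\to\chi'=(r'_0,T',\alpha')$ is a bijective elliptic contraction $\varphi$ with $\alpha\varphi=\alpha'$ and $(vm)\varphi=(v\varphi)m$ for all vertices $v$ and $m\in M$. *)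

theory Defs
  imports Main "HOL-Library.Extended_Nat"
begin

text \<open>A rooted tree (r0, T) is encoded by its vertex set V, its root r0 and the
parent map par (the unique neighbour of a non-root vertex v that is closer to r0).
Every vertex must reach r0 by iterating par; this is exactly a rooted tree.\<close>

definition rooted_tree :: "'v set \<Rightarrow> 'v \<Rightarrow> ('v \<Rightarrow> 'v) \<Rightarrow> bool" where
  "rooted_tree V r0 par \<longleftrightarrow> r0 \<in> V \<and> (\<forall>v\<in>V. v \<noteq> r0 \<longrightarrow> par v \<in> V)
     \<and> (\<forall>v\<in>V. \<exists>n. (par ^^ n) v = r0)"

definition tree_adj :: "'v set \<Rightarrow> 'v \<Rightarrow> ('v \<Rightarrow> 'v) \<Rightarrow> ('v \<times> 'v) set" where
  "tree_adj V r0 par = {(u, v). u \<in> V \<and> v \<in> V \<and>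
      ((u \<noteq> r0 \<and> par u = v) \<or> (v \<noteq> r0 \<and> par v = u))}"

definition tree_dist :: "'v set \<Rightarrow> 'v \<Rightarrow> ('v \<Rightarrow> 'v) \<Rightarrow> 'v \<Rightarrow> 'v \<Rightarrow> nat" where
  "tree_dist V r0 par u v = (LEAST n. (u, v) \<in> (tree_adj V r0 par) ^^ n)"

definition dep :: "'v set \<Rightarrow> 'v \<Rightarrow> ('v \<Rightarrow> 'v) \<Rightarrow> 'v \<Rightarrow> nat" where
  "dep V r0 par v = tree_dist V r0 par r0 v"

text \<open>A ray of length L (L = \<infinity> for infinite rays) is given by its vertices
 \<rho> 0 = r0, \<rho> 1, ..., \<rho> i for enat i \<le> L, with dep (\<rho> i) = i and consecutive
 vertices adjacent. Values \<rho> i for i > L are irrelevant.\<close>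
definition is_ray :: "'v set \<Rightarrow> 'v \<Rightarrow> ('v \<Rightarrow> 'v) \<Rightarrow> enat \<Rightarrow> (nat \<Rightarrow> 'v) \<Rightarrow> bool" where
  "is_ray V r0 par L \<rho> \<longleftrightarrow> \<rho> 0 = r0
     \<and> (\<forall>i. enat i \<le> L \<longrightarrow> \<rho> i \<in> V \<and> dep V r0 par (\<rho> i) = i)
     \<and> (\<forall>i. enat (Suc i) \<le> L \<longrightarrow> (\<rho> i, \<rho> (Suc i)) \<in> tree_adj V r0 par)"

definition max_ray :: "'v set \<Rightarrow> 'v \<Rightarrow> ('v \<Rightarrow> 'v) \<Rightarrow> enat \<Rightarrow> (nat \<Rightarrow> 'v) \<Rightarrow> bool" where
  "max_ray V r0 par L \<rho> \<longleftrightarrow> is_ray V r0 par L \<rho> \<and>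
     \<not> (\<exists>L' \<rho>'. is_ray V r0 par L' \<rho>' \<and> L < L' \<and> (\<forall>i. enat i \<le> L \<longrightarrow> \<rho>' i = \<rho> i))"

definition uniform_tree :: "'v set \<Rightarrow> 'v \<Rightarrow> ('v \<Rightarrow> 'v) \<Rightarrow> bool" where
  "uniform_tree V r0 par \<longleftrightarrow> rooted_tree V r0 par \<and>
     (\<forall>L \<rho> L' \<rho>'. max_ray V r0 par L \<rho> \<longrightarrow> max_ray V r0 par L' \<rho>' \<longrightarrow> L = L')"

definition ell_contr :: "'v set \<Rightarrow> 'v \<Rightarrow> ('v \<Rightarrow> 'v) \<Rightarrow> 'w set \<Rightarrow> 'w \<Rightarrow> ('w \<Rightarrow> 'w)
    \<Rightarrow> ('v \<Rightarrow> 'w) \<Rightarrow> bool" where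
  "ell_contr V r0 par V' r0' par' f \<longleftrightarrow>
     (\<forall>v\<in>V. f v \<in> V' \<and> dep V' r0' par' (f v) = dep V r0 par v) \<and>
     (\<forall>u\<in>V. \<forall>v\<in>V. tree_dist V' r0' par' (f u) (f v) \<le> tree_dist V r0 par u v)"

text \<open>Elliptic M-tree (r0, T, \<alpha>, \<theta>); the homomorphism \<theta> is given as the right
  action act v m = v m, so act v 1 = v and act v (m * m') = act (act v m) m'.\<close>
definition elliptic_Mtree :: "'v set \<Rightarrow> 'v \<Rightarrow> ('v \<Rightarrow> 'v) \<Rightarrow> enat \<Rightarrow> (nat \<Rightarrow> 'v)
    \<Rightarrow> ('v \<Rightarrow> 'm::monoid_mult \<Rightarrow> 'v) \<Rightarrow> bool" where
  "elliptic_Mtree V r0 par L \<alpha> act \<longleftrightarrow>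
     uniform_tree V r0 par \<and> max_ray V r0 par L \<alpha> \<and>
     (\<forall>m. ell_contr V r0 par V r0 par (\<lambda>v. act v m)) \<and>
     (\<forall>v\<in>V. act v 1 = v) \<and>
     (\<forall>v\<in>V. \<forall>m m'. act v (m * m') = act (act v m) m') \<and>
     V = (\<Union>i\<in>{i. enat i \<le> L}. range (act (\<alpha> i)))"

definition D_chi :: "enat \<Rightarrow> (nat \<Rightarrow> 'v) \<Rightarrow> ('v \<Rightarrow> 'm \<Rightarrow> 'v) \<Rightarrow> 'm \<Rightarrow> 'm \<Rightarrow> enat" where
  "D_chi L \<alpha> act m m' =
     Sup {enat j | j. enat j \<le> L \<and> (\<forall>i\<le>j. act (\<alpha> i) m = act (\<alpha> i) m')}"

definition Mtree_iso :: "'v set \<Rightarrow> 'v \<Rightarrow> ('v \<Rightarrow> 'v) \<Rightarrow> enat \<Rightarrow> (nat \<Rightarrow> 'v) \<Rightarrow> ('v \<Rightarrow> 'm \<Rightarrow> 'v)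
    \<Rightarrow> 'w set \<Rightarrow> 'w \<Rightarrow> ('w \<Rightarrow> 'w) \<Rightarrow> enat \<Rightarrow> (nat \<Rightarrow> 'w) \<Rightarrow> ('w \<Rightarrow> 'm \<Rightarrow> 'w)
    \<Rightarrow> ('v \<Rightarrow> 'w) \<Rightarrow> bool" where
  "Mtree_iso V r0 par L \<alpha> act V' r0' par' L' \<alpha>' act' \<phi> \<longleftrightarrow>
     bij_betw \<phi> V V' \<and> ell_contr V r0 par V' r0' par' \<phi> \<and>
     L = L' \<and> (\<forall>i. enat i \<le> L \<longrightarrow> \<phi> (\<alpha> i) = \<alpha>' i) \<and>
     (\<forall>v\<in>V. \<forall>m. \<phi> (act v m) = act' (\<phi> v) m)"

end

theory Submission
  imports Defs
begin


definition hgt :: "'v \<Rightarrow> ('v \<Rightarrow> 'v) \<Rightarrow> 'v \<Rightarrow> nat" where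
  "hgt r0 par v = (LEAST n. (par ^^ n) v = r0)"

lemma hgt_ex: "rooted_tree V r0 par \<Longrightarrow> v \<in> V \<Longrightarrow> (par ^^ hgt r0 par v) v = r0"
  unfolding hgt_def rooted_tree_def by (metis (mono_tags, lifting) LeastI_ex)

lemma hgt_zero: assumes "rooted_tree V r0 par" "v \<in> V" shows "hgt r0 par v = 0 \<longleftrightarrow> v = r0"
proof
  assume a: "hgt r0 par v = 0"
  show "v = r0" using hgt_ex[OF assms(1,2)] unfolding a by simp
next
  assume "v = r0"
  then show "hgt r0 par v = 0" unfolding hgt_def by (simp add: Least_eq_0)
qed

lemma hgt_par: assumes "rooted_tree V r0 par" "v \<in> V" "v \<noteq> r0"
  shows "hgt r0 par v = Suc (hgt r0 par (par v))"
proof -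
  have "hgt r0 par v \<noteq> 0" using hgt_zero[OF assms(1,2)] assms(3) by simp
  then obtain k where k: "hgt r0 par v = Suc k" using not0_implies_Suc by blast
  have e: "(par ^^ k) (par v) = r0" using hgt_ex[OF assms(1,2)] k by (simp only: funpow_Suc_right comp_apply)
  have "hgt r0 par (par v) = k" unfolding hgt_def
  proof (rule Least_equality[where P="\<lambda>n. (par ^^ n) (par v) = r0", OF e])
    fix j assume "(par ^^ j) (par v) = r0"
    then have "(par ^^ Suc j) v = r0" by (simp only: funpow_Suc_right comp_apply)
    then have "hgt r0 par v \<le> Suc j" unfolding hgt_def by (rule Least_le)
    then have "Suc k \<le> Suc j" using k by simp
    then show "k \<le> j" by simp
  qed
  then show ?thesis using k by simp
qed

lemma adj_in: "(u, v) \<in> tree_adj V r0 par \<Longrightarrow> u \<in> V \<and> v \<in> V"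
  unfolding tree_adj_def by auto

lemma path_up: assumes "rooted_tree V r0 par"
  shows "v \<in> V \<Longrightarrow> hgt r0 par v = n \<Longrightarrow> (r0, v) \<in> tree_adj V r0 par ^^ n \<and> (v, r0) \<in> tree_adj V r0 par ^^ n"
proof (induction n arbitrary: v)
  case 0
  then show ?case using hgt_zero[OF assms] by auto
next
  case (Suc n)
  then have ne: "v \<noteq> r0" using hgt_zero[OF assms, of v] by auto
  have pv: "par v \<in> V" using assms Suc(2) ne unfolding rooted_tree_def by auto
  have h: "hgt r0 par (par v) = n" using hgt_par[OF assms Suc(2) ne] Suc(3) by simp
  have a1: "(par v, v) \<in> tree_adj V r0 par" "(v, par v) \<in> tree_adj V r0 par"
    using pv Suc(2) ne unfolding tree_adj_def by auto
  from Suc.IH[OF pv h] a1 show ?case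
    by (meson relpow_Suc_I relpow_Suc_I2)
qed

lemma path_lb: assumes "rooted_tree V r0 par"
  shows "(r0, v) \<in> tree_adj V r0 par ^^ n \<Longrightarrow> hgt r0 par v \<le> n"
proof (induction n arbitrary: v)
  case 0
  then show ?case using hgt_zero[OF assms, of r0] assms unfolding rooted_tree_def by auto
next
  case (Suc n)
  then obtain u where u: "(r0, u) \<in> tree_adj V r0 par ^^ n" "(u, v) \<in> tree_adj V r0 par"
    by auto
  have IH: "hgt r0 par u \<le> n" using Suc.IH[OF u(1)] .
  have uv: "u \<in> V" "v \<in> V" using adj_in[OF u(2)] by auto
  from u(2) have "(u \<noteq> r0 \<and> par u = v) \<or> (v \<noteq> r0 \<and> par v = u)" unfolding tree_adj_def by auto
  then show ?case
  proof
    assume "u \<noteq> r0 \<and> par u = v"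
    then show ?thesis using hgt_par[OF assms uv(1)] IH by auto
  next
    assume "v \<noteq> r0 \<and> par v = u"
    then show ?thesis using hgt_par[OF assms uv(2)] IH by auto
  qed
qed

lemma dep_eq: assumes "rooted_tree V r0 par" "v \<in> V"
  shows "dep V r0 par v = hgt r0 par v"
  unfolding dep_def tree_dist_def
proof (rule Least_equality)
  show "(r0, v) \<in> tree_adj V r0 par ^^ hgt r0 par v" using path_up[OF assms(1,2) refl] by blast
  fix y assume "(r0, v) \<in> tree_adj V r0 par ^^ y"
  then show "hgt r0 par v \<le> y" by (rule path_lb[OF assms(1)])
qed

lemma conn: assumes "rooted_tree V r0 par" "u \<in> V" "v \<in> V"
  shows "\<exists>n. (u, v) \<in> tree_adj V r0 par ^^ n"
proof -
  have "(u, r0) \<in> tree_adj V r0 par ^^ hgt r0 par u" "(r0, v) \<in> tree_adj V r0 par ^^ hgt r0 par v"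
    using path_up[OF assms(1) assms(2) refl] path_up[OF assms(1) assms(3) refl] by auto
  then have "(u, v) \<in> tree_adj V r0 par ^^ (hgt r0 par u + hgt r0 par v)"
    unfolding relpow_add by blast
  then show ?thesis by blast
qed

lemma dist_le1: assumes "rooted_tree V r0 par" "u \<in> V" "v \<in> V" "tree_dist V r0 par u v \<le> 1"
  shows "u = v \<or> (u, v) \<in> tree_adj V r0 par"
proof -
  have "(u, v) \<in> tree_adj V r0 par ^^ tree_dist V r0 par u v"
    unfolding tree_dist_def using conn[OF assms(1-3)] by (rule LeastI_ex)
  moreover have "tree_dist V r0 par u v = 0 \<or> tree_dist V r0 par u v = 1" using assms(4) by auto
  ultimately show ?thesis by (metis relpow_0_E relpow_1)
qed

lemma dist_par: assumes "rooted_tree V r0 par" "v \<in> V" "v \<noteq> r0"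
  shows "tree_dist V r0 par (par v) v \<le> 1"
proof -
  have "par v \<in> V" using assms unfolding rooted_tree_def by auto
  then have "(par v, v) \<in> tree_adj V r0 par ^^ 1" using assms unfolding tree_adj_def by auto
  then show ?thesis unfolding tree_dist_def by (rule Least_le)
qed

lemma adj_up: assumes "rooted_tree V r0 par" "(x, y) \<in> tree_adj V r0 par"
    "hgt r0 par y = Suc (hgt r0 par x)"
  shows "y \<noteq> r0 \<and> par y = x"
proof -
  have xy: "x \<in> V" "y \<in> V" using adj_in[OF assms(2)] by auto
  from assms(2) have "(x \<noteq> r0 \<and> par x = y) \<or> (y \<noteq> r0 \<and> par y = x)" unfolding tree_adj_def by auto
  then show ?thesis using hgt_par[OF assms(1) xy(1)] assms(3) by auto
qed

lemma contr_par: assumes "rooted_tree V r0 par" "rooted_tree V' r0' par'"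
  "ell_contr V r0 par V' r0' par' f" "v \<in> V" "v \<noteq> r0"
  shows "f (par v) = par' (f v)"
proof -
  have pv: "par v \<in> V" using assms unfolding rooted_tree_def by auto
  have fin: "f v \<in> V'" "f (par v) \<in> V'" using assms(3,4) pv unfolding ell_contr_def by auto
  have "dep V' r0' par' (f v) = dep V r0 par v" "dep V' r0' par' (f (par v)) = dep V r0 par (par v)"
    using assms(3,4) pv unfolding ell_contr_def by auto
  then have hh: "hgt r0' par' (f v) = Suc (hgt r0' par' (f (par v)))"
    using dep_eq[OF assms(1)] dep_eq[OF assms(2)] fin pv assms(4) hgt_par[OF assms(1,4,5)] by simp
  have "tree_dist V' r0' par' (f (par v)) (f v) \<le> tree_dist V r0 par (par v) v"
    using assms(3,4) pv unfolding ell_contr_def by auto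
  also have "\<dots> \<le> 1" by (rule dist_par[OF assms(1,4,5)])
  finally have "f (par v) = f v \<or> (f (par v), f v) \<in> tree_adj V' r0' par'"
    using dist_le1[OF assms(2) fin(2,1)] by blast
  then show ?thesis using hh adj_up[OF assms(2)] by auto
qed



lemma hom_path: fixes f :: "'a \<Rightarrow> 'b" assumes "\<And>u. u \<in> V \<Longrightarrow> f u \<in> V'"
  "\<And>u. u \<in> V \<Longrightarrow> f u = r0' \<longleftrightarrow> u = r0"
  "\<And>u. u \<in> V \<Longrightarrow> u \<noteq> r0 \<Longrightarrow> f (par u) = par' (f u)"
  shows "(u, v) \<in> tree_adj V r0 par ^^ n \<Longrightarrow> (f u, f v) \<in> tree_adj V' r0' par' ^^ n"
proof (induction n arbitrary: v)
  case 0
  then show ?case by simp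
next
  case (Suc n)
  then obtain w where w: "(u, w) \<in> tree_adj V r0 par ^^ n" "(w, v) \<in> tree_adj V r0 par"
    by auto
  have "(f w, f v) \<in> tree_adj V' r0' par' "
    using w(2) assms unfolding tree_adj_def by auto
  then show ?case using Suc.IH[OF w(1)] by auto
qed

lemma hom_dist: assumes "rooted_tree V r0 par" "u \<in> V" "v \<in> V"
  "\<And>u. u \<in> V \<Longrightarrow> f u \<in> V'"
  "\<And>u. u \<in> V \<Longrightarrow> f u = r0' \<longleftrightarrow> u = r0"
  "\<And>u. u \<in> V \<Longrightarrow> u \<noteq> r0 \<Longrightarrow> f (par u) = par' (f u)"
  shows "tree_dist V' r0' par' (f u) (f v) \<le> tree_dist V r0 par u v"
proof -
  have "(u, v) \<in> tree_adj V r0 par ^^ tree_dist V r0 par u v"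
    unfolding tree_dist_def using conn[OF assms(1-3)] by (rule LeastI_ex)
  then have "(f u, f v) \<in> tree_adj V' r0' par' ^^ tree_dist V r0 par u v"
    using hom_path[of V f V' r0' r0 par par'] assms(4-6) by blast
  then show ?thesis unfolding tree_dist_def by (rule Least_le)
qed

context
  fixes V :: "'v set" and r0 :: 'v and par :: "'v \<Rightarrow> 'v" and L :: enat
    and \<alpha> :: "nat \<Rightarrow> 'v" and act :: "'v \<Rightarrow> 'm::monoid_mult \<Rightarrow> 'v"
  assumes E: "elliptic_Mtree V r0 par L \<alpha> act"
begin

lemma E_rt: "rooted_tree V r0 par"
  using E unfolding elliptic_Mtree_def uniform_tree_def by auto

lemma E_ray: "is_ray V r0 par L \<alpha>"
  using E unfolding elliptic_Mtree_def max_ray_def by blast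

lemma E_alpha: assumes "enat i \<le> L" shows "\<alpha> i \<in> V \<and> hgt r0 par (\<alpha> i) = i"
proof -
  have "\<alpha> i \<in> V" "dep V r0 par (\<alpha> i) = i" using E_ray assms unfolding is_ray_def by auto
  then show ?thesis using dep_eq[OF E_rt] by simp
qed

lemma E_alpha0: "\<alpha> 0 = r0"
  using E_ray unfolding is_ray_def by auto

lemma E_contr: "ell_contr V r0 par V r0 par (\<lambda>v. act v m)"
  using E unfolding elliptic_Mtree_def by auto

lemma E_act: "v \<in> V \<Longrightarrow> act v m \<in> V \<and> hgt r0 par (act v m) = hgt r0 par v"
  using E_contr[of m] dep_eq[OF E_rt] unfolding ell_contr_def by auto

lemma E_act_par: "v \<in> V \<Longrightarrow> v \<noteq> r0 \<Longrightarrow> act (par v) m = par (act v m)"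
  using contr_par[OF E_rt E_rt E_contr[of m]] by blast

lemma E_alpha_par: assumes "enat (Suc i) \<le> L"
  shows "\<alpha> (Suc i) \<noteq> r0 \<and> par (\<alpha> (Suc i)) = \<alpha> i"
proof -
  have a: "(\<alpha> i, \<alpha> (Suc i)) \<in> tree_adj V r0 par"
    using E_ray assms unfolding is_ray_def by auto
  have "enat i < L" using assms by (simp add: Suc_ile_eq)
  then have "enat i \<le> L" by simp
  then show ?thesis using adj_up[OF E_rt a] E_alpha assms by auto
qed

lemma E_down: "enat (i + k) \<le> L \<Longrightarrow> act (\<alpha> i) m = (par ^^ k) (act (\<alpha> (i + k)) m)"
proof (induction k)
  case 0
  then show ?case by simp
next
  case (Suc k)
  have "enat (Suc (i + k)) \<le> L" using Suc.prems by simp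
  then have "enat (i + k) < L" by (simp add: Suc_ile_eq)
  then have le: "enat (i + k) \<le> L" by simp
  have ap: "\<alpha> (Suc (i + k)) \<noteq> r0 \<and> par (\<alpha> (Suc (i + k))) = \<alpha> (i + k)"
    using E_alpha_par Suc.prems by simp
  have "act (\<alpha> (i + k)) m = par (act (\<alpha> (Suc (i + k))) m)"
    using E_act_par[of "\<alpha> (Suc (i + k))" m] ap E_alpha[of "Suc (i+k)"] Suc.prems by simp
  then have "act (\<alpha> i) m = (par ^^ k) (par (act (\<alpha> (Suc (i+k))) m))" using Suc.IH[OF le] by simp
  then show ?case by (simp only: add_Suc_right funpow_Suc_right comp_apply)
qed

lemma E_eqdown: "enat j \<le> L \<Longrightarrow> i \<le> j \<Longrightarrow> act (\<alpha> j) m = act (\<alpha> j) m'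
   \<Longrightarrow> act (\<alpha> i) m = act (\<alpha> i) m'"
  using E_down[of i "j - i" m] E_down[of i "j - i" m'] by simp

lemma E_root: "act r0 m = r0"
proof -
  have "r0 \<in> V" using E_rt unfolding rooted_tree_def by auto
  then have "act r0 m \<in> V" "hgt r0 par (act r0 m) = 0"
    using E_act[of r0 m] hgt_zero[OF E_rt, of r0] by auto
  then show ?thesis using hgt_zero[OF E_rt, of "act r0 m"] by simp
qed


lemma E_in_S: "enat j \<le> L \<Longrightarrow> act (\<alpha> j) m = act (\<alpha> j) m' \<Longrightarrow>
  enat j \<in> {enat j | j. enat j \<le> L \<and> (\<forall>i\<le>j. act (\<alpha> i) m = act (\<alpha> i) m')}"
  using E_eqdown by blast

lemma E_D: assumes "enat i \<le> L"
  shows "act (\<alpha> i) m = act (\<alpha> i) m' \<longleftrightarrow> enat i \<le> D_chi L \<alpha> act m m'"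
proof
  assume "act (\<alpha> i) m = act (\<alpha> i) m'"
  then show "enat i \<le> D_chi L \<alpha> act m m'" unfolding D_chi_def
    by (rule Sup_upper[OF E_in_S[OF assms]])
next
  assume a: "enat i \<le> D_chi L \<alpha> act m m'"
  show "act (\<alpha> i) m = act (\<alpha> i) m'"
  proof (cases i)
    case 0
    then show ?thesis using E_alpha0 E_root by simp
  next
    case (Suc i0)
    have "enat i0 < enat i" using Suc by simp
    also note a
    finally have "enat i0 < Sup {enat j | j. enat j \<le> L \<and> (\<forall>i\<le>j. act (\<alpha> i) m = act (\<alpha> i) m')}"
      unfolding D_chi_def .
    then obtain x where x: "x \<in> {enat j | j. enat j \<le> L \<and> (\<forall>i\<le>j. act (\<alpha> i) m = act (\<alpha> i) m')}"
      "enat i0 < x" by (auto simp: less_Sup_iff)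
    then obtain j where j: "x = enat j" "\<forall>i\<le>j. act (\<alpha> i) m = act (\<alpha> i) m'" by blast
    have "i \<le> j" using x(2) j(1) Suc by simp
    then show ?thesis using j(2) by blast
  qed
qed

lemma E_D11: "D_chi L \<alpha> act 1 1 = L"
proof -
  have S: "{enat j | j. enat j \<le> L \<and> (\<forall>i\<le>j. act (\<alpha> i) 1 = act (\<alpha> i) 1)} = {enat j | j. enat j \<le> L}"
    by simp
  have le: "Sup {enat j | j. enat j \<le> L} \<le> L" by (rule Sup_least) auto
  have ge: "L \<le> Sup {enat j | j. enat j \<le> L}"
  proof (cases L)
    case (enat n)
    then show ?thesis by (intro Sup_upper) auto
  next
    case infinity
    show ?thesis
    proof (rule ccontr)
      assume "\<not> L \<le> Sup {enat j | j. enat j \<le> L}"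
      then have "Sup {enat j | j. enat j \<le> L} < \<infinity>" using infinity by simp
      then obtain n where n: "Sup {enat j | j. enat j \<le> L} = enat n"
        by (cases "Sup {enat j | j. enat j \<le> L}") auto
      have "enat (Suc n) \<le> Sup {enat j | j. enat j \<le> L}"
        by (rule Sup_upper) (use infinity in auto)
      then show False using n by simp
    qed
  qed
  show ?thesis unfolding D_chi_def S using le ge by (rule antisym)
qed

lemma E_V: "v \<in> V \<longleftrightarrow> (\<exists>i m. enat i \<le> L \<and> v = act (\<alpha> i) m)"
proof -
  have Veq: "V = (\<Union>i\<in>{i. enat i \<le> L}. range (act (\<alpha> i)))"
    using E unfolding elliptic_Mtree_def by blast
  show ?thesis by (subst Veq) blast
qed

lemma E_mult: "v \<in> V \<Longrightarrow> act v (m * n) = act (act v m) n"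
  using E unfolding elliptic_Mtree_def by blast

lemma E_one: "v \<in> V \<Longrightarrow> act v 1 = v"
  using E unfolding elliptic_Mtree_def by blast

end


lemma transfer:
  fixes act :: "'v \<Rightarrow> 'm::monoid_mult \<Rightarrow> 'v" and act' :: "'w \<Rightarrow> 'm \<Rightarrow> 'w"
  assumes E: "elliptic_Mtree V r0 par L \<alpha> act"
    and E': "elliptic_Mtree V' r0' par' L' \<alpha>' act'"
    and DD: "D_chi L \<alpha> act = D_chi L' \<alpha>' act'"
    and i: "enat i \<le> L" and k: "enat k \<le> L" and eq: "act (\<alpha> i) m = act (\<alpha> k) m'"
  shows "i = k \<and> act' (\<alpha>' i) m = act' (\<alpha>' i) m'"
proof -
  have LL: "L = L'" using E_D11[OF E] E_D11[OF E'] DD by metis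
  have "i = hgt r0 par (act (\<alpha> i) m)" using E_alpha[OF E i] E_act[OF E, of "\<alpha> i" m] by simp
  also have "\<dots> = hgt r0 par (act (\<alpha> k) m')" using eq by simp
  also have "\<dots> = k" using E_alpha[OF E k] E_act[OF E, of "\<alpha> k" m'] by simp
  finally have ik: "i = k" .
  have "enat i \<le> D_chi L \<alpha> act m m'" using E_D[OF E i] eq ik by simp
  then have "enat i \<le> D_chi L' \<alpha>' act' m m'" using DD by simp
  then have "act' (\<alpha>' i) m = act' (\<alpha>' i) m'" using E_D[OF E', of i] i LL by simp
  then show ?thesis using ik by simp
qed

theorem lemma4p7:
  fixes V :: "'v set" and r0 :: 'v and par :: "'v \<Rightarrow> 'v" and L :: enat
    and \<alpha> :: "nat \<Rightarrow> 'v" and act :: "'v \<Rightarrow> 'm::monoid_mult \<Rightarrow> 'v"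
    and V' :: "'w set" and r0' :: 'w and par' :: "'w \<Rightarrow> 'w" and L' :: enat
    and \<alpha>' :: "nat \<Rightarrow> 'w" and act' :: "'w \<Rightarrow> 'm \<Rightarrow> 'w"
  assumes "elliptic_Mtree V r0 par L \<alpha> act"
    and "elliptic_Mtree V' r0' par' L' \<alpha>' act'"
  shows "(D_chi L \<alpha> act = D_chi L' \<alpha>' act') \<longleftrightarrow>
         (\<exists>\<phi>. Mtree_iso V r0 par L \<alpha> act V' r0' par' L' \<alpha>' act' \<phi>)"
proof
  note E = assms(1) and E' = assms(2)
  assume DD: "D_chi L \<alpha> act = D_chi L' \<alpha>' act'"
  have LL: "L = L'" using E_D11[OF E] E_D11[OF E'] DD by metis
  define \<phi> where "\<phi> v = (SOME w. \<exists>i m. enat i \<le> L \<and> v = act (\<alpha> i) m \<and> w = act' (\<alpha>' i) m)" for v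
  have phi: "\<phi> (act (\<alpha> i) m) = act' (\<alpha>' i) m" if i: "enat i \<le> L" for i m
  proof -
    have "\<exists>w. \<exists>i2 m2. enat i2 \<le> L \<and> act (\<alpha> i) m = act (\<alpha> i2) m2 \<and> w = act' (\<alpha>' i2) m2"
      using i by blast
    then have "\<exists>i2 m2. enat i2 \<le> L \<and> act (\<alpha> i) m = act (\<alpha> i2) m2 \<and> \<phi> (act (\<alpha> i) m) = act' (\<alpha>' i2) m2"
      unfolding \<phi>_def by (rule someI_ex)
    then obtain i2 m2 where a: "enat i2 \<le> L" "act (\<alpha> i2) m2 = act (\<alpha> i) m"
       "\<phi> (act (\<alpha> i) m) = act' (\<alpha>' i2) m2" by metis
    from transfer[OF E E' DD a(1) i a(2)] a(3) show ?thesis by metis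
  qed
  have rt: "rooted_tree V r0 par" "rooted_tree V' r0' par'" using E_rt[OF E] E_rt[OF E'] by auto
  have inV: "\<phi> v \<in> V'" if vV: "v \<in> V" for v
  proof -
    obtain i m where im: "enat i \<le> L" "v = act (\<alpha> i) m" using E_V[OF E, THEN iffD1, OF vV] by (elim exE conjE) blast
    then have "\<phi> v = act' (\<alpha>' i) m" using phi by simp
    moreover have "enat i \<le> L'" using im LL by simp
    ultimately show ?thesis using E_V[OF E', of "\<phi> v"] by blast
  qed
  have hg: "hgt r0' par' (\<phi> v) = hgt r0 par v" if vV: "v \<in> V" for v
  proof -
    obtain i m where im: "enat i \<le> L" "v = act (\<alpha> i) m" using E_V[OF E, THEN iffD1, OF vV] by (elim exE conjE) blast
    have "\<phi> v = act' (\<alpha>' i) m" using phi im by simp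
    moreover have "hgt r0' par' (act' (\<alpha>' i) m) = i" using E_alpha[OF E', of i] LL im(1)
       E_act[OF E', of "\<alpha>' i" m] by simp
    moreover have "hgt r0 par v = i" using E_alpha[OF E im(1)] im(2) E_act[OF E, of "\<alpha> i" m] by simp
    ultimately show ?thesis by simp
  qed
  have root: "\<phi> u = r0' \<longleftrightarrow> u = r0" if "u \<in> V" for u
    using hgt_zero[OF rt(1) that] hgt_zero[OF rt(2) inV[OF that]] hg[OF that] by simp
  have parc: "\<phi> (par u) = par' (\<phi> u)" if u: "u \<in> V" "u \<noteq> r0" for u
  proof -
    obtain i m where im: "enat i \<le> L" "u = act (\<alpha> i) m" using E_V[OF E, THEN iffD1, OF u(1)] by (elim exE conjE) blast
    have "i \<noteq> 0"
    proof
      assume "i = 0"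
      then have "u = act r0 m" using im E_alpha0[OF E] by simp
      then show False using E_root[OF E, of m] u(2) by simp
    qed
    then obtain j where j: "i = Suc j" using not0_implies_Suc by blast
    have "enat (Suc j) \<le> L" using im(1) j by simp
    then have "enat j < L" by (simp add: Suc_ile_eq)
    then have jL: "enat j \<le> L" by simp
    have a1: "\<alpha> (Suc j) \<noteq> r0 \<and> par (\<alpha> (Suc j)) = \<alpha> j" using E_alpha_par[OF E] im(1) j by simp
    have a2: "\<alpha>' (Suc j) \<noteq> r0' \<and> par' (\<alpha>' (Suc j)) = \<alpha>' j" using E_alpha_par[OF E'] im(1) j LL by simp
    have "par u = act (\<alpha> j) m"
      using E_act_par[OF E, of "\<alpha> (Suc j)" m] a1 E_alpha[OF E, of "Suc j"] im j by simp
    then have "\<phi> (par u) = act' (\<alpha>' j) m" using phi jL by simp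
    also have "\<dots> = par' (act' (\<alpha>' (Suc j)) m)"
      using E_act_par[OF E', of "\<alpha>' (Suc j)" m] a2 E_alpha[OF E', of "Suc j"] im j LL by simp
    also have "\<dots> = par' (\<phi> u)" using phi im j by simp
    finally show ?thesis .
  qed
  have inj: "inj_on \<phi> V"
  proof
    fix u v assume uv: "u \<in> V" "v \<in> V" "\<phi> u = \<phi> v"
    obtain i m where im: "enat i \<le> L" "u = act (\<alpha> i) m" using E_V[OF E, THEN iffD1, OF uv(1)] by (elim exE conjE) blast
    obtain k m' where km: "enat k \<le> L" "v = act (\<alpha> k) m'" using E_V[OF E, THEN iffD1, OF uv(2)] by (elim exE conjE) blast
    have "act' (\<alpha>' i) m = act' (\<alpha>' k) m'" using uv(3) im km phi by simp
    from transfer[OF E' E DD[symmetric], of i k m m'] this im km LL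
    show "u = v" by simp
  qed
  have img: "\<phi> ` V = V'"
  proof
    show "\<phi> ` V \<subseteq> V'" using inV by blast
    show "V' \<subseteq> \<phi> ` V"
    proof
      fix w assume "w \<in> V'"
      then obtain i m where im: "enat i \<le> L'" "w = act' (\<alpha>' i) m" using E_V[OF E'] by blast
      then have "w = \<phi> (act (\<alpha> i) m)" "act (\<alpha> i) m \<in> V" using phi LL E_V[OF E] by auto
      then show "w \<in> \<phi> ` V" by blast
    qed
  qed
  have ell: "ell_contr V r0 par V' r0' par' \<phi>"
    unfolding ell_contr_def
  proof (intro conjI ballI)
    fix v assume v: "v \<in> V"
    show "\<phi> v \<in> V'" using inV[OF v] .
    show "dep V' r0' par' (\<phi> v) = dep V r0 par v"
      using dep_eq[OF rt(1) v] dep_eq[OF rt(2) inV[OF v]] hg[OF v] by simp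
  next
    fix u v assume uv: "u \<in> V" "v \<in> V"
    show "tree_dist V' r0' par' (\<phi> u) (\<phi> v) \<le> tree_dist V r0 par u v"
      by (rule hom_dist[where f=\<phi>, OF rt(1) uv inV root parc])
  qed
  have al: "\<phi> (\<alpha> i) = \<alpha>' i" if "enat i \<le> L" for i
    using phi[OF that, of 1] E_one[OF E, of "\<alpha> i"] E_one[OF E', of "\<alpha>' i"]
      E_alpha[OF E that] E_alpha[OF E', of i] that LL by simp
  have comm: "\<phi> (act v n) = act' (\<phi> v) n" if vV: "v \<in> V" for v n
  proof -
    obtain i m where im: "enat i \<le> L" "v = act (\<alpha> i) m" using E_V[OF E, THEN iffD1, OF vV] by (elim exE conjE) blast
    have "act v n = act (\<alpha> i) (m * n)" using E_mult[OF E, of "\<alpha> i" m n] E_alpha[OF E im(1)] im by simp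
    then have "\<phi> (act v n) = act' (\<alpha>' i) (m * n)" using phi im by simp
    also have "\<dots> = act' (act' (\<alpha>' i) m) n" using E_mult[OF E', of "\<alpha>' i" m n] E_alpha[OF E', of i] im LL by simp
    also have "\<dots> = act' (\<phi> v) n" using phi im by simp
    finally show ?thesis .
  qed
  have "Mtree_iso V r0 par L \<alpha> act V' r0' par' L' \<alpha>' act' \<phi>"
    unfolding Mtree_iso_def bij_betw_def
  proof (intro conjI)
    show "inj_on \<phi> V" by (rule inj)
    show "\<phi> ` V = V'" by (rule img)
    show "ell_contr V r0 par V' r0' par' \<phi>" by (rule ell)
    show "L = L'" by (rule LL)
    show "\<forall>i. enat i \<le> L \<longrightarrow> \<phi> (\<alpha> i) = \<alpha>' i" using al by blast
    show "\<forall>v\<in>V. \<forall>m. \<phi> (act v m) = act' (\<phi> v) m" using comm by blast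
  qed
  then show "\<exists>\<phi>. Mtree_iso V r0 par L \<alpha> act V' r0' par' L' \<alpha>' act' \<phi>" by blast
next
  note E = assms(1) and E' = assms(2)
  assume "\<exists>\<phi>. Mtree_iso V r0 par L \<alpha> act V' r0' par' L' \<alpha>' act' \<phi>"
  then obtain \<phi> where iso: "Mtree_iso V r0 par L \<alpha> act V' r0' par' L' \<alpha>' act' \<phi>" by blast
  have LL: "L = L'" and inj: "inj_on \<phi> V" and al: "\<And>i. enat i \<le> L \<Longrightarrow> \<phi> (\<alpha> i) = \<alpha>' i"
    and comm: "\<And>v m. v \<in> V \<Longrightarrow> \<phi> (act v m) = act' (\<phi> v) m"
    using iso unfolding Mtree_iso_def bij_betw_def by auto
  have key: "(act (\<alpha> i) m = act (\<alpha> i) m') = (act' (\<alpha>' i) m = act' (\<alpha>' i) m')"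
    if i: "enat i \<le> L" for i m m'
  proof -
    have ai: "\<alpha> i \<in> V" using E_alpha[OF E i] by simp
    have "\<phi> (act (\<alpha> i) m) = act' (\<alpha>' i) m" "\<phi> (act (\<alpha> i) m') = act' (\<alpha>' i) m'"
      using comm[OF ai] al[OF i] by auto
    moreover have "act (\<alpha> i) m \<in> V" "act (\<alpha> i) m' \<in> V" using E_act[OF E ai] by auto
    ultimately show ?thesis using inj unfolding inj_on_def by metis
  qed
  have S: "{enat j | j. enat j \<le> L \<and> (\<forall>i\<le>j. act (\<alpha> i) m = act (\<alpha> i) m')} =
           {enat j | j. enat j \<le> L' \<and> (\<forall>i\<le>j. act' (\<alpha>' i) m = act' (\<alpha>' i) m')}" for m m'
  proof -
    have "(\<forall>i\<le>j. act (\<alpha> i) m = act (\<alpha> i) m') = (\<forall>i\<le>j. act' (\<alpha>' i) m = act' (\<alpha>' i) m')"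
      if "enat j \<le> L" for j
      using key that by (meson enat_ord_simps(1) order_trans)
    then show ?thesis using LL by blast
  qed
  show "D_chi L \<alpha> act = D_chi L' \<alpha>' act'"
    unfolding D_chi_def using S by (intro ext) simp
qed

end
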